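(* Let $X$ and $Y$ be metric spaces and let $A(X)\subseteq C(X)$ and $A(Y)\subseteq C(Y)$ be adequate subspaces. Assume that either (a) $A(Y)=A^{\mathrm{loc}}(Y)$ or $A(Y)=A^{\mathrm{loc}}_b(Y)$, or (b) $Y$ is complete and for every separated sequence $(y_n)$ in $Y$ there exists $g\in A(Y)$ with $g(y_{2n})=1$ and $g(y_{2n-1})=0$ for all $n$. If $h:\mathcal{A}X\to\mathcal{A}Y$ is a homeomorphism and $x_0\in X$, then $h(x_0)\in Y$.
   Context: All functions are real-valued. $A(X)\subseteq C(X)$ separates points from closed sets if for every $x\in X$ and closed $F\not\ni x$ there is $f\in A(X)$ with $f(x)=1$, $f=0$ on $F$. $A(X)$ is adequate if (a) it separates points from closed sets and contains the constants; (b) there is a continuous nondecreasing $g:\mathbb{R}\to\mathbb{R}$ with $g(t)=0$ for $t\le0$, $g(t)=1$ for $t\ge1$, and $g\circ f\in A(X)$ for all $f\in A(X)$; (c) every $f\in A(X)$ is a difference of two nonnegative elements of $A(X)$. $A^{\mathrm{loc}}(Y)$ is the space of real functions $f$ on $Y$ such that every $y_0\in Y$ has a neighborhood $U$ and some $g\in A(Y)$ with $f=g$ on $U$; $A^{\mathrm{loc}}_b(Y)$ is its subspace of bounded functions. A sequence (set of points) in a metric space is separated if there is $\varepsilon>0$ with $d(y,y')\ge\varepsilon$ for any two distinct points $y,y'$ of it. The $A(X)$-compactification $\mathcal{A}X$ is the closure of $i(X)$ in $[-\infty,\infty]^{A(X)}$ (product of order topologies), $i(x)(\varphi)=\varphi(x)$,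 with $X$ identified with $i(X)$; $\mathcal{A}Y$ is defined analogously. *)

theory Defs
  imports "HOL-Analysis.Analysis" "HOL-Library.Extended_Real"
begin

text \<open>The space X is the whole carrier of a type of class metric_space;
  functions on X are functions of type 'a \<Rightarrow> real.\<close>

definition lin_subspace_fun :: "('a \<Rightarrow> real) set \<Rightarrow> bool" where
  "lin_subspace_fun A \<longleftrightarrow> (\<lambda>_. 0) \<in> A \<and>
     (\<forall>f\<in>A. \<forall>g\<in>A. (\<lambda>x. f x + g x) \<in> A) \<and>
     (\<forall>c::real. \<forall>f\<in>A. (\<lambda>x. c * f x) \<in> A)"

definition separates_points_closed :: "('a::topological_space \<Rightarrow> real) set \<Rightarrow> bool" where
  "separates_points_closed A \<longleftrightarrow>
     (\<forall>x F. closed F \<and> x \<notin> F \<longrightarrow> (\<exists>f\<in>A. f x = 1 \<and> (\<forall>z\<in>F. f z = 0)))"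

definition adequate :: "('a::topological_space \<Rightarrow> real) set \<Rightarrow> bool" where
  "adequate A \<longleftrightarrow>
     lin_subspace_fun A \<and> (\<forall>f\<in>A. continuous_on UNIV f) \<and>
     separates_points_closed A \<and> (\<forall>c. (\<lambda>_. c) \<in> A) \<and>
     (\<exists>g::real \<Rightarrow> real. continuous_on UNIV g \<and> mono g \<and>
        (\<forall>t\<le>0. g t = 0) \<and> (\<forall>t\<ge>1. g t = 1) \<and> (\<forall>f\<in>A. g \<circ> f \<in> A)) \<and>
     (\<forall>f\<in>A. \<exists>f1\<in>A. \<exists>f2\<in>A. (\<forall>x. f1 x \<ge> 0) \<and> (\<forall>x. f2 x \<ge> 0) \<and>
        f = (\<lambda>x. f1 x - f2 x))"

definition Aloc :: "('a::topological_space \<Rightarrow> real) set \<Rightarrow> ('a \<Rightarrow> real) set" where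
  "Aloc A = {f. \<forall>y0. \<exists>U. open U \<and> y0 \<in> U \<and> (\<exists>g\<in>A. \<forall>z\<in>U. f z = g z)}"

definition Aloc_b :: "('a::topological_space \<Rightarrow> real) set \<Rightarrow> ('a \<Rightarrow> real) set" where
  "Aloc_b A = {f \<in> Aloc A. bounded (range f)}"

definition separated_seq :: "(nat \<Rightarrow> 'a::metric_space) \<Rightarrow> bool" where
  "separated_seq y \<longleftrightarrow> (\<exists>e>0. \<forall>m n. m \<noteq> n \<longrightarrow> dist (y m) (y n) \<ge> e)"

definition evalmap :: "('a \<Rightarrow> real) set \<Rightarrow> 'a \<Rightarrow> (('a \<Rightarrow> real) \<Rightarrow> ereal)" where
  "evalmap A x = (\<lambda>\<phi>\<in>A. ereal (\<phi> x))"

definition ambient_top :: "('a \<Rightarrow> real) set \<Rightarrow> (('a \<Rightarrow> real) \<Rightarrow> ereal) topology" where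
  "ambient_top A = product_topology (\<lambda>_. (euclidean :: ereal topology)) A"

text \<open>The A(X)-compactification as a topological space: closure of i(X) with the subspace topology.\<close>
definition Acomp :: "('a \<Rightarrow> real) set \<Rightarrow> (('a \<Rightarrow> real) \<Rightarrow> ereal) topology" where
  "Acomp A = subtopology (ambient_top A) ((ambient_top A) closure_of (evalmap A ` UNIV))"

end

theory Submission
  imports Defs
begin


lemma evalmap_top: "evalmap A x \<in> topspace (ambient_top A)"
  by (simp add: evalmap_def ambient_top_def)

lemma E_sub: "evalmap A ` UNIV \<subseteq> topspace (ambient_top A)"
  using evalmap_top by (metis image_subsetI)

lemma topspace_Acomp: "topspace (Acomp A) = (ambient_top A) closure_of (evalmap A ` UNIV)"
  unfolding Acomp_def by (metis closure_of_subset_topspace inf.absorb2 topspace_subtopology)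

lemma evalmap_in_Acomp: "evalmap A x \<in> topspace (Acomp A)"
  unfolding topspace_Acomp by (meson closure_of_subset[OF E_sub] rangeI subsetD)

lemma proj_cont: "\<phi> \<in> A \<Longrightarrow> continuous_map (Acomp A) euclidean (\<lambda>q. q \<phi>)"
  unfolding Acomp_def ambient_top_def
  by (intro continuous_map_from_subtopology) (rule continuous_map_product_projection)

lemma compact_Acomp: "compact_space (Acomp A)"
proof -
  have c: "compact (UNIV::ereal set)" by (rule compact_UNIV)
  have "compact_space (ambient_top A)"
    unfolding ambient_top_def compact_space_product_topology
    using c by (simp add: compact_space_def compactin_euclidean_iff)
  hence "compactin (ambient_top A) ((ambient_top A) closure_of (evalmap A ` UNIV))"
    by (simp add: closedin_compact_space)
  thus ?thesis unfolding Acomp_def by (rule compact_space_subtopology)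
qed


lemma topspace_Acomp_PiE: "q \<in> topspace (Acomp A) \<Longrightarrow> q \<in> (\<Pi>\<^sub>E \<phi>\<in>A. UNIV)"
  unfolding Acomp_def ambient_top_def by auto

lemma nest_open:
  assumes "\<And>k. openin X (V k)"
  shows "openin X (\<Inter>k\<in>{..n::nat}. V k)"
proof (induction n)
  case 0 then show ?case using assms by simp
next
  case (Suc n)
  have "(\<Inter>k\<in>{..Suc n}. V k) = (\<Inter>k\<in>{..n}. V k) \<inter> V (Suc n)"
    by (auto simp: le_Suc_eq)
  then show ?case using Suc assms by (simp add: openin_Int)
qed

lemma nest_closed:
  assumes "\<And>k. closedin X (V k)"
  shows "closedin X (\<Inter>k\<in>{..n::nat}. V k)"
proof (induction n)
  case 0 then show ?case using assms by simp
next
  case (Suc n)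
  have "(\<Inter>k\<in>{..Suc n}. V k) = (\<Inter>k\<in>{..n}. V k) \<inter> V (Suc n)"
    by (auto simp: le_Suc_eq)
  then show ?case using Suc assms by (simp add: closedin_Int)
qed

lemma X_part:
  fixes AX :: "('a::metric_space \<Rightarrow> real) set" and x0 :: 'a
  assumes adq: "adequate AX"
  shows "\<exists>W C. (\<forall>n. openin (Acomp AX) (W n)) \<and> (\<forall>n. closedin (Acomp AX) (C n)) \<and>
     (\<forall>n. W n \<subseteq> C n) \<and> (\<forall>n. C (Suc n) \<subseteq> C n) \<and> (\<forall>n. evalmap AX x0 \<in> W n) \<and>
     (\<forall>r. r \<in> topspace (Acomp AX) \<and> (\<forall>n. r \<in> C n) \<longrightarrow> r = evalmap AX x0)"
proof -
  let ?T = "Acomp AX"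
  have sep: "separates_points_closed AX" and cont: "\<forall>f\<in>AX. continuous_on UNIV f"
    using adq by (auto simp: adequate_def)
  have "\<forall>n. \<exists>f\<in>AX. f x0 = 1 \<and> (\<forall>z\<in>- ball x0 (1 / Suc n). f z = 0)"
  proof
    fix n :: nat
    have "closed (- ball x0 (1 / Suc n))" by auto
    moreover have "x0 \<notin> - ball x0 (1 / Suc n)" by auto
    ultimately show "\<exists>f\<in>AX. f x0 = 1 \<and> (\<forall>z\<in>- ball x0 (1 / Suc n). f z = 0)"
      using sep unfolding separates_points_closed_def by blast
  qed
  then obtain f where fA: "\<And>n. f n \<in> AX" and f1: "\<And>n. f n x0 = 1"
    and f0: "\<And>n z. z \<notin> ball x0 (1 / Suc n) \<Longrightarrow> f n z = 0"
    by (metis ComplI)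
  define V where "V k = {q \<in> topspace ?T. q (f k) \<in> {ereal (1/2)<..}}" for k
  define D where "D k = {q \<in> topspace ?T. q (f k) \<in> {ereal (1/2)..}}" for k
  define W where "W n = (\<Inter>k\<in>{..n}. V k)" for n
  define C where "C n = (\<Inter>k\<in>{..n}. D k)" for n
  have oV: "openin ?T (V k)" for k
    unfolding V_def by (rule openin_continuous_map_preimage[OF proj_cont[OF fA]]) simp
  have cD: "closedin ?T (D k)" for k
    unfolding D_def by (rule closedin_continuous_map_preimage[OF proj_cont[OF fA]]) simp
  have "\<forall>n. openin ?T (W n)" unfolding W_def using oV nest_open by blast
  moreover have "\<forall>n. closedin ?T (C n)" unfolding C_def using cD nest_closed by blast
  moreover have "V k \<subseteq> D k" for k unfolding V_def D_def using less_imp_le by fastforce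
  then have "\<forall>n. W n \<subseteq> C n" unfolding W_def C_def by blast
  moreover have "\<forall>n. C (Suc n) \<subseteq> C n" unfolding C_def by auto
  moreover have "\<forall>n. evalmap AX x0 \<in> W n"
    unfolding W_def V_def using evalmap_in_Acomp fA f1 by (auto simp: evalmap_def)
  moreover have "\<forall>r. r \<in> topspace ?T \<and> (\<forall>n. r \<in> C n) \<longrightarrow> r = evalmap AX x0"
  proof (intro allI impI)
    fix r assume r: "r \<in> topspace ?T \<and> (\<forall>n. r \<in> C n)"
    have rge: "r (f n) \<ge> ereal (1/2)" for n using r unfolding C_def D_def by auto
    have rP: "r \<in> (\<Pi>\<^sub>E \<phi>\<in>AX. UNIV)" using r topspace_Acomp_PiE by blast
    show "r = evalmap AX x0"
    proof (rule ccontr)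
      assume ne: "r \<noteq> evalmap AX x0"
      then obtain \<phi> where \<phi>A: "\<phi> \<in> AX" and ne\<phi>: "r \<phi> \<noteq> ereal (\<phi> x0)"
        using rP by (auto simp: evalmap_def PiE_def extensional_def fun_eq_iff split: if_splits)
      obtain N M where N: "open N" and M: "open M" and rN: "r \<phi> \<in> N" and xM: "ereal (\<phi> x0) \<in> M"
        and NM: "N \<inter> M = {}"
        using hausdorff[OF ne\<phi>] by blast
      have "continuous_on UNIV (\<lambda>x. ereal (\<phi> x))"
        using cont \<phi>A by (intro continuous_on_ereal) auto
      then have "open ((\<lambda>x. ereal (\<phi> x)) -` M)"
        using M by (intro open_vimage) 
      then have "open {x. ereal (\<phi> x) \<in> M}" by (simp add: vimage_def)
      then obtain \<delta> where \<delta>: "\<delta> > 0" "ball x0 \<delta> \<subseteq> {x. ereal (\<phi> x) \<in> M}"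
        using xM by (metis mem_Collect_eq open_contains_ball)
      obtain n :: nat where n: "1 / Suc n < \<delta>"
        using \<delta>(1) by (metis nat_approx_posE of_nat_Suc)
      define Ob where "Ob = {q \<in> topspace (ambient_top AX). q \<phi> \<in> N \<and> q (f n) \<in> {ereal (1/4)<..}}"
      have cm: "\<psi> \<in> AX \<Longrightarrow> continuous_map (ambient_top AX) euclidean (\<lambda>q. q \<psi>)" for \<psi>
        unfolding ambient_top_def by (rule continuous_map_product_projection)
      have Ob_eq: "Ob = {q \<in> topspace (ambient_top AX). q \<phi> \<in> N} \<inter> {q \<in> topspace (ambient_top AX). q (f n) \<in> {ereal (1/4)<..}}"
        unfolding Ob_def by auto
      have oa: "openin (ambient_top AX) {q \<in> topspace (ambient_top AX). q \<phi> \<in> N}"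
        using N by (intro openin_continuous_map_preimage[OF cm[OF \<phi>A]]) simp
      have ob: "openin (ambient_top AX) {q \<in> topspace (ambient_top AX). q (f n) \<in> {ereal (1/4)<..}}"
        by (intro openin_continuous_map_preimage[OF cm[OF fA]]) simp
      have oO: "openin (ambient_top AX) Ob"
        unfolding Ob_eq by (rule openin_Int[OF oa ob])
      have "ereal (1/4) < ereal (1/2)" by simp
      then have r4: "ereal (1/4) < r (f n)" using rge[of n] by (meson less_le_trans)
      have rtop: "r \<in> (ambient_top AX) closure_of (evalmap AX ` UNIV)"
        using r topspace_Acomp by blast
      have "r \<in> Ob" unfolding Ob_def using r4 rN rtop closure_of_subset_topspace[of "ambient_top AX"] by blast
      then obtain y where yE: "y \<in> evalmap AX ` UNIV" and yO: "y \<in> Ob"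
        using rtop oO unfolding in_closure_of by blast
      then obtain x where yx: "y = evalmap AX x" by blast
      have "ereal (\<phi> x) \<in> N" using yO \<phi>A unfolding yx Ob_def evalmap_def by auto
      moreover have "ereal (1/4) < ereal (f n x)" using yO fA unfolding yx Ob_def evalmap_def by auto
      then have "f n x \<noteq> 0" by auto
      then have "x \<in> ball x0 (1 / Suc n)" using f0 by blast
      then have "x \<in> ball x0 \<delta>" using n by auto
      then have "ereal (\<phi> x) \<in> M" using \<delta>(2) by auto
      ultimately show False using NM by auto
    qed
  qed
  ultimately show ?thesis by blast
qed


lemma compact_nest_gen:
  assumes X: "compact_space X" and cl: "\<And>n. closedin X (K n)" and ne: "\<And>n. K n \<noteq> {}"
    and dec: "\<And>n. K (Suc n) \<subseteq> K (n::nat)"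
  shows "\<Inter>(range K) \<noteq> {}"
proof -
  have "\<forall>\<F>. finite \<F> \<and> \<F> \<subseteq> range K \<longrightarrow> \<Inter>\<F> \<noteq> {}"
  proof (intro allI impI)
    fix \<F> assume F: "finite \<F> \<and> \<F> \<subseteq> range K"
    then obtain I where I: "finite I" "\<F> = K ` I" by (meson finite_subset_image)
    show "\<Inter>\<F> \<noteq> {}"
    proof (cases "I = {}")
      case True then show ?thesis using I by simp
    next
      case False
      have "K (Max I) \<subseteq> K i" if "i \<in> I" for i
        using I that by (intro lift_Suc_antimono_le[of K, OF dec]) simp
      then have "K (Max I) \<subseteq> \<Inter>\<F>" using I(2) by (simp add: le_INF_iff)
      then show ?thesis using ne[of "Max I"] by auto
    qed
  qed
  moreover have "\<forall>C\<in>range K. closedin X C" using cl by simp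
  ultimately show ?thesis using X unfolding compact_space_fip by (metis (no_types, lifting))
qed


lemma filterlim_inj_nat: "inj (s::nat \<Rightarrow> nat) \<Longrightarrow> filterlim s sequentially sequentially"
proof -
  assume inj: "inj s"
  have "eventually (\<lambda>x. Z \<le> s x) cofinite" for Z
  proof -
    have "{x. \<not> Z \<le> s x} \<subseteq> s -` {..<Z}" by auto
    moreover have "finite (s -` {..<Z})" using inj by (intro finite_vimageI) auto
    ultimately show ?thesis unfolding eventually_cofinite by (meson finite_subset)
  qed
  then show ?thesis unfolding filterlim_at_top cofinite_eq_sequentially by blast
qed


lemma conv_inj: "(X \<longlongrightarrow> l) sequentially \<Longrightarrow> inj (s::nat\<Rightarrow>nat) \<Longrightarrow> ((\<lambda>j. X (s j)) \<longlongrightarrow> l) sequentially"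
  by (rule filterlim_compose[OF _ filterlim_inj_nat])


lemma alt_contra:
  fixes X :: "nat \<Rightarrow> 'a::t2_space"
  assumes "X \<longlonglongrightarrow> l" "\<And>j. X (2*j) = a" "\<And>j. X (2*j+1) = b" "a \<noteq> b"
  shows False
proof -
  have "strict_mono (\<lambda>j::nat. 2*j)" "strict_mono (\<lambda>j::nat. 2*j+1)" by (auto simp: strict_mono_def)
  then have "(X \<circ> (\<lambda>j. 2*j)) \<longlonglongrightarrow> l" "(X \<circ> (\<lambda>j. 2*j+1)) \<longlonglongrightarrow> l"
    using assms(1) LIMSEQ_subseq_LIMSEQ by blast+
  then have "(\<lambda>j. a) \<longlonglongrightarrow> l" "(\<lambda>j. b) \<longlonglongrightarrow> l" using assms(2,3) by (simp_all add: o_def)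
  then have "a = l" "b = l" using LIMSEQ_unique[OF tendsto_const] by blast+
  then show False using assms(4) by simp
qed


lemma greedy:
  assumes "\<And>K. finite K \<Longrightarrow> \<exists>n. Q K (y n)"
  shows "\<exists>s::nat\<Rightarrow>nat. \<forall>k. Q (y ` s ` {..<k}) (y (s k))"
proof -
  define c where "c K = (SOME n. Q K (y n))" for K
  define A where "A = rec_nat {} (\<lambda>m S. insert (y (c S)) S)"
  have A0: "A 0 = {}" and AS: "A (Suc m) = insert (y (c (A m))) (A m)" for m
    unfolding A_def by simp_all
  define s where "s m = c (A m)" for m
  have Aeq: "A k = y ` s ` {..<k}" for k
    by (induction k) (auto simp: A0 AS s_def lessThan_Suc)
  have fin: "finite (A k)" for k by (simp add: Aeq)
  have "Q (A k) (y (s k))" for k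
    unfolding s_def c_def using assms[OF fin] by (rule someI_ex)
  then show ?thesis using Aeq by metis
qed


lemma lin_sum:
  assumes "lin_subspace_fun A" "finite F" "\<And>m. m \<in> F \<Longrightarrow> f m \<in> A"
  shows "(\<lambda>x. \<Sum>m\<in>F. f m x) \<in> A"
  using assms(2,3)
proof (induction F rule: finite_induct)
  case empty then show ?case using assms(1) by (simp add: lin_subspace_fun_def)
next
  case (insert a F)
  have add: "\<forall>f\<in>A. \<forall>g\<in>A. (\<lambda>x. f x + g x) \<in> A" using assms(1) unfolding lin_subspace_fun_def by (rule conjunct1[OF conjunct2])
  have "f a \<in> A" "(\<lambda>x. \<Sum>m\<in>F. f m x) \<in> A" using insert by simp_all
  then have "(\<lambda>x. f a x + (\<Sum>m\<in>F. f m x)) \<in> A"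
    using add[rule_format, of "f a" "\<lambda>x. \<Sum>m\<in>F. f m x"] by simp
  then show ?case using insert by simp
qed


lemma cover_contra:
  fixes y :: "nat \<Rightarrow> 'b::metric_space"
  assumes LF: "\<And>z. \<exists>\<delta>>0. finite {n. y n \<in> ball z \<delta>}"
    and K: "finite K" and cov: "range y \<subseteq> (\<Union>z\<in>K. ball z (SOME \<delta>. \<delta> > 0 \<and> finite {n. y n \<in> ball z \<delta>}))"
  shows False
proof -
  define d where "d z = (SOME \<delta>. \<delta> > 0 \<and> finite {n. y n \<in> ball z \<delta>})" for z
  have fd: "finite {n. y n \<in> ball z (d z)}" for z unfolding d_def using someI_ex[OF LF[of z]] by blast
  have "UNIV \<subseteq> (\<Union>z\<in>K. {n. y n \<in> ball z (d z)})"
  proof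
    fix n :: nat
    have "y n \<in> (\<Union>z\<in>K. ball z (d z))" using cov unfolding d_def by (meson rangeI subsetD)
    then show "n \<in> (\<Union>z\<in>K. {n. y n \<in> ball z (d z)})" by simp
  qed
  moreover have "finite (\<Union>z\<in>K. {n. y n \<in> ball z (d z)})" using K fd by blast
  ultimately show False by (meson infinite_UNIV_nat finite_subset)
qed



lemma Y_seq:
  fixes AY :: "('b::metric_space \<Rightarrow> real) set"
  assumes oW: "\<forall>n. openin (Acomp AY) (W n)" and cC: "\<forall>n. closedin (Acomp AY) (C n)"
    and WC: "\<forall>n. W n \<subseteq> C n" and Cdec: "\<forall>n. C (Suc n) \<subseteq> C n" and pW: "\<forall>n. p \<in> W n"
    and uniq: "\<forall>r. r \<in> topspace (Acomp AY) \<and> (\<forall>n. r \<in> C n) \<longrightarrow> r = p"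
    and pE: "p \<notin> range (evalmap AY)" and cont: "\<forall>f\<in>AY. continuous_on UNIV f"
  shows "\<exists>y. (\<forall>\<phi>\<in>AY. (\<lambda>n. ereal (\<phi> (y n))) \<longlonglongrightarrow> p \<phi>) \<and> (\<forall>z. \<exists>\<delta>>0. finite {n. y n \<in> ball z \<delta>})"
proof -
  let ?T = "Acomp AY" and ?E = "range (evalmap AY)" and ?amb = "ambient_top AY"
  have "\<exists>x. evalmap AY x \<in> W n" for n
  proof -
    obtain Ob where O: "openin ?amb Ob" "W n = Ob \<inter> ?amb closure_of ?E"
      using oW unfolding Acomp_def openin_subtopology by blast
    have "p \<in> Ob \<inter> ?amb closure_of ?E" using pW O(2) by metis
    then have pcl: "p \<in> ?amb closure_of ?E" and pO: "p \<in> Ob" by simp_all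
    have cl': "\<forall>T. p \<in> T \<and> openin ?amb T \<longrightarrow> (\<exists>y. y \<in> ?E \<and> y \<in> T)"
      using in_closure_of[THEN iffD1, OF pcl, THEN conjunct2] .
    from cl'[rule_format, OF conjI[OF pO O(1)]]
    obtain e where e: "e \<in> ?E" "e \<in> Ob" by (elim exE conjE)
    have "e \<in> ?amb closure_of ?E" by (rule subsetD[OF closure_of_subset[OF E_sub] e(1)])
    then have "e \<in> W n" using e(2) O(2) by simp
    then show ?thesis using e(1) by auto
  qed
  then have "\<forall>n. \<exists>x. evalmap AY x \<in> W n" by blast
  from choice[OF this] obtain y where yW': "\<forall>n. evalmap AY (y n) \<in> W n" by (elim exE)
  have yW: "evalmap AY (y n) \<in> W n" for n using yW' by (rule spec)
  have Cmono: "m \<le> n \<Longrightarrow> C n \<subseteq> C m" for m n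
    using lift_Suc_antimono_le[of C, OF Cdec[rule_format]] by blast
  have conv: "(\<lambda>n. ereal (\<phi> (y n))) \<longlonglongrightarrow> p \<phi>" if \<phi>A: "\<phi> \<in> AY" for \<phi>
  proof (rule topological_tendstoI)
    fix S :: "ereal set" assume S: "open S" "p \<phi> \<in> S"
    show "\<forall>\<^sub>F n in sequentially. ereal (\<phi> (y n)) \<in> S"
    proof (rule ccontr)
      assume "\<not> ?thesis"
      then have fr: "\<forall>N. \<exists>n\<ge>N. ereal (\<phi> (y n)) \<notin> S" unfolding eventually_sequentially by blast
      define K where "K m = C m \<inter> {r \<in> topspace ?T. r \<phi> \<in> - S}" for m
      have "closed (- S)" using S(1) by auto
      then have cl2: "closedin ?T {r \<in> topspace ?T. r \<phi> \<in> - S}"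
        by (intro closedin_continuous_map_preimage[OF proj_cont[OF \<phi>A]]) simp
      have clK: "closedin ?T (K m)" for m unfolding K_def using cC cl2 by (simp add: closedin_Int)
      have neK: "K m \<noteq> {}" for m
      proof -
        obtain n where n: "n \<ge> m" "ereal (\<phi> (y n)) \<notin> S" using fr by blast
        have "evalmap AY (y n) \<in> C m" using yW[of n] WC Cmono[OF n(1)] by blast
        moreover have "evalmap AY (y n) \<phi> = ereal (\<phi> (y n))" using \<phi>A by (simp add: evalmap_def)
        ultimately have "evalmap AY (y n) \<in> K m" using n(2) evalmap_in_Acomp unfolding K_def by simp
        then show ?thesis by blast
      qed
      have decK: "K (Suc m) \<subseteq> K m" for m unfolding K_def using Cdec by blast
      obtain r where r: "r \<in> \<Inter>(range K)"
        using compact_nest_gen[of "Acomp AY" K, OF compact_Acomp clK neK decK] by blast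
      then have "r \<in> topspace ?T \<and> (\<forall>n. r \<in> C n)" unfolding K_def by blast
      then have "r = p" using uniq by blast
      moreover have "r \<phi> \<notin> S" using r unfolding K_def by blast
      ultimately show False using S(2) by simp
    qed
  qed
  have LF: "\<exists>\<delta>>0. finite {n. y n \<in> ball z \<delta>}" for z
  proof (rule ccontr)
    assume "\<not> ?thesis"
    then have inf: "\<And>\<delta>. \<delta> > 0 \<Longrightarrow> infinite {n. y n \<in> ball z \<delta>}" by blast
    have ptop: "p \<in> topspace ?T" by (rule subsetD[OF openin_subset[OF oW[rule_format, of 0]] pW[rule_format, of 0]])
    have pext: "p \<in> extensional AY" using topspace_Acomp_PiE[OF ptop] by (simp add: PiE_iff)
    have "p = evalmap AY z"
    proof (rule extensionalityI[OF pext])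
      show "evalmap AY z \<in> extensional AY" by (simp add: evalmap_def)
      fix \<phi> assume \<phi>A: "\<phi> \<in> AY"
      show "p \<phi> = evalmap AY z \<phi>"
      proof (rule ccontr)
        assume "p \<phi> \<noteq> evalmap AY z \<phi>"
        then have ne: "p \<phi> \<noteq> ereal (\<phi> z)" using \<phi>A by (simp add: evalmap_def)
        obtain N M where N: "open N" and M: "open M" and rN: "p \<phi> \<in> N" and xM: "ereal (\<phi> z) \<in> M"
          and NM: "N \<inter> M = {}"
          using hausdorff[OF ne] by blast
        have "continuous_on UNIV (\<lambda>x. ereal (\<phi> x))"
          using cont \<phi>A by (intro continuous_on_ereal) auto
        then have "open ((\<lambda>x. ereal (\<phi> x)) -` M)"
          using M by (intro open_vimage) 
        then have "open {x. ereal (\<phi> x) \<in> M}" by (simp add: vimage_def)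
        then obtain \<delta> where \<delta>: "\<delta> > 0" "ball z \<delta> \<subseteq> {x. ereal (\<phi> x) \<in> M}"
          using xM by (metis mem_Collect_eq open_contains_ball)
        obtain N0 where N0: "\<And>n. n \<ge> N0 \<Longrightarrow> ereal (\<phi> (y n)) \<in> N"
          using conv[OF \<phi>A] N rN unfolding tendsto_def eventually_sequentially by blast
        obtain n where n: "n \<ge> N0" "n \<in> {n. y n \<in> ball z \<delta>}"
          using inf[OF \<delta>(1)] unfolding infinite_nat_iff_unbounded_le by blast
        have "ereal (\<phi> (y n)) \<in> M" using n(2) \<delta>(2) by blast
        then show False using N0[OF n(1)] NM by blast
      qed
    qed
    then show False using pE by blast
  qed
  show ?thesis using conv LF by blast
qed


lemma key_alt:
  fixes AY :: "('b::metric_space \<Rightarrow> real) set" and y :: "nat \<Rightarrow> 'b" and s :: "nat \<Rightarrow> nat"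
  assumes conv: "\<forall>\<phi>\<in>AY. \<exists>l. (\<lambda>n. ereal (\<phi> (y n))) \<longlonglongrightarrow> l"
    and s: "inj s" and g: "g \<in> AY" and ga: "\<And>j. g (y (s (2*j))) = a" and gb: "\<And>j. g (y (s (2*j+1))) = b"
    and ab: "a \<noteq> b"
  shows False
proof -
  obtain l where l: "(\<lambda>n. ereal (g (y n))) \<longlonglongrightarrow> l" using conv g by blast
  have "(\<lambda>j. ereal (g (y (s j)))) \<longlonglongrightarrow> l" by (rule conv_inj[OF l s])
  moreover have "ereal a \<noteq> ereal b" using ab by simp
  ultimately show False
    using alt_contra[of "\<lambda>j. ereal (g (y (s j)))" l "ereal a" "ereal b"] ga gb by simp
qed

lemma case_b:
  fixes AY :: "('b::metric_space \<Rightarrow> real) set" and y :: "nat \<Rightarrow> 'b"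
  assumes cU: "complete (UNIV :: 'b set)"
    and gsep: "\<forall>y. separated_seq y \<longrightarrow> (\<exists>g\<in>AY. \<forall>n. g (y (2*n+1)) = 1 \<and> g (y (2*n)) = 0)"
    and conv: "\<forall>\<phi>\<in>AY. \<exists>l. (\<lambda>n. ereal (\<phi> (y n))) \<longlonglongrightarrow> l"
    and LF: "\<forall>z. \<exists>\<delta>>0. finite {n. y n \<in> ball z \<delta>}"
  shows False
proof -
  define d where "d z = (SOME \<delta>. \<delta> > 0 \<and> finite {n. y n \<in> ball z \<delta>})" for z
  have dpos: "d z > 0" for z unfolding d_def using someI_ex[OF LF[rule_format, of z]] by blast
  have nocov: "\<not> range y \<subseteq> (\<Union>z\<in>K. ball z (d z))" if "finite K" for K
    using cover_contra[of y K] LF that unfolding d_def by blast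
  have "\<exists>e>0. \<forall>K. finite K \<longrightarrow> \<not> range y \<subseteq> (\<Union>x\<in>K. ball x e)"
  proof (rule ccontr)
    assume "\<not> ?thesis"
    then have tb: "\<And>e. e > 0 \<Longrightarrow> \<exists>K. finite K \<and> range y \<subseteq> (\<Union>x\<in>K. ball x e)" by blast
    let ?S = "closure (range y)"
    have "complete ?S" by (rule complete_closed_subset[OF closed_closure subset_UNIV cU])
    moreover have "\<exists>K. finite K \<and> ?S \<subseteq> (\<Union>x\<in>K. ball x e)" if e: "e > 0" for e
    proof -
      obtain K where K: "finite K" "range y \<subseteq> (\<Union>x\<in>K. ball x (e/2))" using tb[of "e/2"] e by auto
      have "?S \<subseteq> (\<Union>x\<in>K. ball x e)"
      proof
        fix x assume "x \<in> ?S"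
        then obtain w where w: "w \<in> range y" "dist w x < e/2"
          using e unfolding closure_approachable by (meson half_gt_zero)
        then obtain k where k: "k \<in> K" "w \<in> ball k (e/2)" using K(2) by blast
        have "dist k x \<le> dist k w + dist w x" by (rule dist_triangle)
        then have "dist k x < e" using k(2) w(2) by (simp add: dist_commute)
        then show "x \<in> (\<Union>x\<in>K. ball x e)" using k(1) by auto
      qed
      then show ?thesis using K(1) by blast
    qed
    ultimately have cS: "compact ?S" unfolding compact_eq_totally_bounded by blast
    have "?S \<subseteq> (\<Union>z\<in>?S. ball z (d z))" using dpos by auto
    then obtain K where K: "K \<subseteq> ?S" "finite K" "?S \<subseteq> (\<Union>z\<in>K. ball z (d z))"
      using compactE_image[OF cS, of ?S "\<lambda>z. ball z (d z)"] by blast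
    have "range y \<subseteq> (\<Union>z\<in>K. ball z (d z))" using K(3) closure_subset by blast
    then show False using nocov[OF K(2)] by blast
  qed
  then obtain e where e: "e > 0" "\<And>K. finite K \<Longrightarrow> \<not> range y \<subseteq> (\<Union>x\<in>K. ball x e)" by blast
  have ex: "\<exists>n. \<forall>a\<in>K. e \<le> dist a (y n)" if fK: "finite K" for K
  proof -
    obtain n where "y n \<notin> (\<Union>x\<in>K. ball x e)" using e(2)[OF fK] by blast
    then show ?thesis by (auto simp: not_less)
  qed
  have "\<exists>s::nat\<Rightarrow>nat. \<forall>k. \<forall>a\<in>y ` s ` {..<k}. e \<le> dist a (y (s k))"
    using greedy[of "\<lambda>K v. \<forall>a\<in>K. e \<le> dist a v" y] ex by simp
  then obtain s :: "nat \<Rightarrow> nat" where s0: "\<forall>k. \<forall>a\<in>y ` s ` {..<k}. e \<le> dist a (y (s k))" by (elim exE)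
  have s: "\<forall>a\<in>y ` s ` {..<k}. e \<le> dist a (y (s k))" for k using s0 by (rule spec)
  have lt: "e \<le> dist (y (s m)) (y (s k))" if "m < k" for m k
    using s[of k] that by blast
  have sep: "e \<le> dist (y (s m)) (y (s k))" if "m \<noteq> k" for m k
  proof (cases "m < k")
    case True then show ?thesis using lt by blast
  next
    case False then have "k < m" using that by simp
    then show ?thesis using lt[of k m] by (simp add: dist_commute)
  qed
  have injs: "inj s"
  proof (rule injI)
    fix m k assume "s m = s k"
    then show "m = k" using sep[of m k] e(1) by (cases "m = k") auto
  qed
  have "separated_seq (\<lambda>n. y (s n))" unfolding separated_seq_def using sep e(1) by blast
  then obtain g where g: "g \<in> AY" "\<forall>n. g (y (s (2*n+1))) = 1 \<and> g (y (s (2*n))) = 0"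
    using gsep by blast
  show False
    by (rule key_alt[OF conv injs g(1), of 0 1]) (use g(2) in auto)
qed


lemma case_a:
  fixes AY :: "('b::metric_space \<Rightarrow> real) set" and y :: "nat \<Rightarrow> 'b"
  assumes adq: "adequate AY" and cond: "AY = Aloc AY \<or> AY = Aloc_b AY"
    and conv: "\<forall>\<phi>\<in>AY. \<exists>l. (\<lambda>n. ereal (\<phi> (y n))) \<longlonglongrightarrow> l"
    and LF: "\<forall>z. \<exists>\<delta>>0. finite {n. y n \<in> ball z \<delta>}"
  shows False
proof -
  define d where "d z = (SOME \<delta>. \<delta> > 0 \<and> finite {n. y n \<in> ball z \<delta>})" for z
  have dd: "d z > 0 \<and> finite {n. y n \<in> ball z (d z)}" for z
    unfolding d_def using someI_ex[OF LF[rule_format, of z]] by blast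
  have nocov: "\<not> range y \<subseteq> (\<Union>z\<in>K. ball z (d z))" if fK: "finite K" for K
    using cover_contra[of y K] LF fK unfolding d_def by blast
  have ex: "\<exists>n. y n \<notin> K" if fK: "finite K" for K
  proof (rule ccontr)
    assume "\<not> ?thesis"
    then have "range y \<subseteq> K" by blast
    moreover have "K \<subseteq> (\<Union>z\<in>K. ball z (d z))" using dd by auto
    ultimately show False using nocov[OF fK] by blast
  qed
  have "\<exists>s::nat\<Rightarrow>nat. \<forall>k. y (s k) \<notin> y ` s ` {..<k}"
    using greedy[of "\<lambda>K v. v \<notin> K" y] ex by simp
  then obtain s :: "nat \<Rightarrow> nat" where s0: "\<forall>k. y (s k) \<notin> y ` s ` {..<k}" by (elim exE)
  define t where "t j = y (s j)" for j
  have tlt: "t m \<noteq> t k" if "m < k" for m k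
  proof -
    have "y (s m) \<in> y ` s ` {..<k}" using that by (intro imageI) simp
    then show ?thesis using s0[rule_format, of k] unfolding t_def by metis
  qed
  have tne: "t m \<noteq> t k" if "m \<noteq> k" for m k
    using tlt[of m k] tlt[of k m] that by (cases "m < k") auto
  have injs: "inj s"
  proof (rule injI)
    fix m k assume "s m = s k"
    then have "t m = t k" unfolding t_def by simp
    then show "m = k" using tne by blast
  qed
  have LFt: "finite {m. t m \<in> ball z (d z)}" for z
  proof -
    have "{m. t m \<in> ball z (d z)} = s -` {n. y n \<in> ball z (d z)}" unfolding t_def by auto
    then show ?thesis using finite_vimageI[OF conjunct2[OF dd] injs] by simp
  qed
  have "\<exists>\<epsilon>>0. \<forall>j. j \<noteq> m \<longrightarrow> \<epsilon> \<le> dist (t m) (t j)" for m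
  proof -
    define F where "F = {j. t j \<in> ball (t m) (d (t m))}"
    have fF: "finite F" unfolding F_def by (rule LFt)
    define \<epsilon> where "\<epsilon> = Min (insert (d (t m)) ((\<lambda>j. dist (t m) (t j)) ` (F - {m})))"
    have fin: "finite (insert (d (t m)) ((\<lambda>j. dist (t m) (t j)) ` (F - {m})))" using fF by simp
    have "0 < \<epsilon>" unfolding \<epsilon>_def using fin dd tne by auto
    moreover have "\<epsilon> \<le> dist (t m) (t j)" if "j \<noteq> m" for j
    proof (cases "j \<in> F")
      case True
      then have "dist (t m) (t j) \<in> insert (d (t m)) ((\<lambda>j. dist (t m) (t j)) ` (F - {m}))"
        using that by blast
      then show ?thesis unfolding \<epsilon>_def using fin by (rule Min_le[rotated])
    next
      case False
      then have "d (t m) \<le> dist (t m) (t j)" unfolding F_def by (simp add: not_less)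
      moreover have "\<epsilon> \<le> d (t m)" unfolding \<epsilon>_def using fin by (rule Min_le) simp
      ultimately show ?thesis by linarith
    qed
    ultimately show ?thesis by blast
  qed
  then obtain \<epsilon> where \<epsilon>: "\<And>m. \<epsilon> m > 0" "\<And>m j. j \<noteq> m \<Longrightarrow> \<epsilon> m \<le> dist (t m) (t j)"
    by metis
  define r where "r m = min (\<epsilon> m / 2) (1 / Suc m)" for m
  have rpos: "r m > 0" for m unfolding r_def using \<epsilon>(1)[of m] by simp
  have rlt: "r m < \<epsilon> m" for m unfolding r_def using \<epsilon>(1)[of m] by simp
  have rle: "r m \<le> 1 / Suc m" for m unfolding r_def by simp
  have sepA: "separates_points_closed AY" using adq unfolding adequate_def by blast
  have "\<exists>f\<in>AY. f (t m) = 1 \<and> (\<forall>z\<in>- ball (t m) (r m). f z = 0)" for m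
    using sepA[unfolded separates_points_closed_def, rule_format, of "- ball (t m) (r m)" "t m"] rpos[of m]
    by auto
  then obtain f where fA: "\<And>m. f m \<in> AY" and f1: "\<And>m. f m (t m) = 1"
    and f0: "\<And>m z. z \<notin> ball (t m) (r m) \<Longrightarrow> f m z = 0"
    by (metis ComplI)
  have lin: "lin_subspace_fun AY" using adq unfolding adequate_def by blast
  obtain G :: "real \<Rightarrow> real" where Gm: "mono G" and G0: "\<And>v. v \<le> 0 \<Longrightarrow> G v = 0"
    and G1: "\<And>v. v \<ge> 1 \<Longrightarrow> G v = 1" and GA: "\<And>h. h \<in> AY \<Longrightarrow> G \<circ> h \<in> AY"
    using adq unfolding adequate_def by metis
  have G01: "G v \<in> {0..1}" for v
  proof (cases "v \<le> 0")
    case True then show ?thesis using G0 by simp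
  next
    case False
    show ?thesis
    proof (cases "v \<ge> 1")
      case True then show ?thesis using G1 by simp
    next
      case False2: False
      have "G 0 \<le> G v" "G v \<le> G 1" using Gm False False2 by (auto simp: mono_def)
      then show ?thesis using G0[of 0] G1[of 1] by simp
    qed
  qed
  define g0 where "g0 x = (\<Sum>m\<in>{m. even m \<and> x \<in> ball (t m) (r m)}. f m x)" for x
  define g where "g x = G (g0 x)" for x
  have loc: "\<exists>U. open U \<and> z \<in> U \<and> (\<exists>h\<in>AY. \<forall>x\<in>U. g x = h x)" for z
  proof -
    define \<delta> where "\<delta> = d z"
    have \<delta>: "\<delta> > 0" "finite {m. t m \<in> ball z \<delta>}" using dd LFt unfolding \<delta>_def by auto
    obtain N :: nat where N: "2 / \<delta> < N" using reals_Archimedean2 by blast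
    define F' where "F' = {m \<in> {m. t m \<in> ball z \<delta>} \<union> {..N}. even m}"
    have fF': "finite F'" unfolding F'_def using \<delta>(2) by simp
    have sub: "{m. even m \<and> x \<in> ball (t m) (r m)} \<subseteq> F'" if x: "x \<in> ball z (\<delta>/2)" for x
    proof
      fix m assume m: "m \<in> {m. even m \<and> x \<in> ball (t m) (r m)}"
      then have ev: "even m" and xm: "dist (t m) x < r m" by auto
      show "m \<in> F'"
      proof (cases "r m < \<delta>/2")
        case True
        have "dist z (t m) \<le> dist z x + dist x (t m)" by (rule dist_triangle)
        moreover have "dist z x < \<delta>/2" using x by simp
        moreover have "dist x (t m) < r m" using xm by (simp add: dist_commute)
        ultimately have "dist z (t m) < \<delta>" using True by linarith
        then show ?thesis unfolding F'_def using ev by simp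
      next
        case False
        then have "\<delta>/2 \<le> 1 / real (Suc m)" using rle[of m] by linarith
        then have "real (Suc m) * \<delta> \<le> 2" using \<delta>(1) by (simp add: field_simps)
        then have "real (Suc m) \<le> 2 / \<delta>" using \<delta>(1) by (simp add: field_simps)
        then have "m \<le> N" using N by linarith
        then show ?thesis unfolding F'_def using ev by simp
      qed
    qed
    have eq: "g0 x = (\<Sum>m\<in>F'. f m x)" if x: "x \<in> ball z (\<delta>/2)" for x
      unfolding g0_def
    proof (rule sum.mono_neutral_left[OF fF' sub[OF x]])
      show "\<forall>i\<in>F' - {m. even m \<and> x \<in> ball (t m) (r m)}. f i x = 0"
        unfolding F'_def using f0 by auto
    qed
    have hA: "G \<circ> (\<lambda>x. \<Sum>m\<in>F'. f m x) \<in> AY" by (rule GA[OF lin_sum[OF lin fF' fA]])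
    have eqg: "\<forall>x\<in>ball z (\<delta>/2). g x = (G \<circ> (\<lambda>x. \<Sum>m\<in>F'. f m x)) x"
      using eq unfolding g_def by simp
    have "\<exists>h\<in>AY. \<forall>x\<in>ball z (\<delta>/2). g x = h x" 
      by (rule bexI[where x="G \<circ> (\<lambda>x. \<Sum>m\<in>F'. f m x)"]) (rule eqg, rule hA)
    moreover have "z \<in> ball z (\<delta>/2)" using \<delta>(1) by simp
    ultimately show ?thesis using open_ball by blast
  qed
  have "range g \<subseteq> {0..1}" unfolding g_def using G01 by auto
  then have gbd: "bounded (range g)" by (rule bounded_subset[OF bounded_closed_interval])
  have gAl: "g \<in> Aloc AY" unfolding Aloc_def using loc by simp
  have gA: "g \<in> AY"
    using cond
  proof
    assume h: "AY = Aloc AY" show ?thesis by (subst h) (rule gAl)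
  next
    assume h: "AY = Aloc_b AY"
    have "g \<in> Aloc_b AY" using gAl gbd unfolding Aloc_b_def by simp
    then show ?thesis by (subst h)
  qed
  have Sj: "{m. even m \<and> t j \<in> ball (t m) (r m)} = (if even j then {j} else {})" for j
  proof -
    have "t j \<notin> ball (t m) (r m)" if "m \<noteq> j" for m
      using \<epsilon>(2)[OF that[symmetric]] rlt[of m] by simp
    moreover have "t j \<in> ball (t j) (r j)" using rpos[of j] by simp
    ultimately show ?thesis by auto metis
  qed
  have ge: "g (y (s (2*k))) = 1" for k
    unfolding g_def g0_def t_def[symmetric] Sj using f1 G1 by simp
  have go: "g (y (s (2*k+1))) = 0" for k
    unfolding g_def g0_def t_def[symmetric] Sj using G0 by simp
  show False by (rule key_alt[OF conv injs gA ge go]) simp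
qed


lemma Y_part:
  fixes AY :: "('b::metric_space \<Rightarrow> real) set"
  assumes adq: "adequate AY"
    and cond: "(AY = Aloc AY \<or> AY = Aloc_b AY) \<or>
         (complete (UNIV :: 'b set) \<and>
          (\<forall>y. separated_seq y \<longrightarrow>
             (\<exists>g\<in>AY. \<forall>n. g (y (2*n+1)) = 1 \<and> g (y (2*n)) = 0)))"
    and oW: "\<forall>n. openin (Acomp AY) (W n)" and cC: "\<forall>n. closedin (Acomp AY) (C n)"
    and WC: "\<forall>n. W n \<subseteq> C n" and Cdec: "\<forall>n. C (Suc n) \<subseteq> C n" and pW: "\<forall>n. p \<in> W n"
    and uniq: "\<forall>r. r \<in> topspace (Acomp AY) \<and> (\<forall>n. r \<in> C n) \<longrightarrow> r = p"
  shows "p \<in> range (evalmap AY)"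
proof (rule ccontr)
  assume pE: "p \<notin> range (evalmap AY)"
  have cont: "\<forall>f\<in>AY. continuous_on UNIV f" using adq unfolding adequate_def by blast
  from Y_seq[OF oW cC WC Cdec pW uniq pE cont]
  obtain y where conv: "\<forall>\<phi>\<in>AY. (\<lambda>n. ereal (\<phi> (y n))) \<longlonglongrightarrow> p \<phi>"
    and LF: "\<forall>z. \<exists>\<delta>>0. finite {n. y n \<in> ball z \<delta>}" by (elim exE conjE)
  have conv': "\<forall>\<phi>\<in>AY. \<exists>l. (\<lambda>n. ereal (\<phi> (y n))) \<longlonglongrightarrow> l" using conv by blast
  from cond show False
  proof
    assume "AY = Aloc AY \<or> AY = Aloc_b AY"
    then show False using case_a[OF adq _ conv' LF] by blast
  next
    assume "complete (UNIV :: 'b set) \<and>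
          (\<forall>y. separated_seq y \<longrightarrow> (\<exists>g\<in>AY. \<forall>n. g (y (2*n+1)) = 1 \<and> g (y (2*n)) = 0))"
    then show False using case_b[OF _ _ conv' LF] by blast
  qed
qed

theorem corollary4p3:
  fixes AX :: "('a::metric_space \<Rightarrow> real) set"
    and AY :: "('b::metric_space \<Rightarrow> real) set"
    and h :: "(('a \<Rightarrow> real) \<Rightarrow> ereal) \<Rightarrow> (('b \<Rightarrow> real) \<Rightarrow> ereal)"
    and x0 :: 'a
  assumes "adequate AX" and "adequate AY"
    and "(AY = Aloc AY \<or> AY = Aloc_b AY) \<or>
         (complete (UNIV :: 'b set) \<and>
          (\<forall>y. separated_seq y \<longrightarrow>
             (\<exists>g\<in>AY. \<forall>n. g (y (2*n+1)) = 1 \<and> g (y (2*n)) = 0)))"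
    and "homeomorphic_map (Acomp AX) (Acomp AY) h"
  shows "h (evalmap AX x0) \<in> evalmap AY ` UNIV"
proof -
  note hom = assms(4)
  from X_part[OF assms(1), of x0]
  obtain W C where H1: "\<forall>n. openin (Acomp AX) (W n)" and H2: "\<forall>n. closedin (Acomp AX) (C n)"
    and H3: "\<forall>n. W n \<subseteq> C n" and H4: "\<forall>n. C (Suc n) \<subseteq> C n" and H5: "\<forall>n. evalmap AX x0 \<in> W n"
    and H6: "\<forall>r. r \<in> topspace (Acomp AX) \<and> (\<forall>n. r \<in> C n) \<longrightarrow> r = evalmap AX x0"
    by (elim exE conjE)
  have Wsub: "W n \<subseteq> topspace (Acomp AX)" for n by (rule openin_subset[OF H1[rule_format]])
  have Csub: "C n \<subseteq> topspace (Acomp AX)" for n by (rule closedin_subset[OF H2[rule_format]])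
  have oW': "\<forall>n. openin (Acomp AY) (h ` W n)"
    using homeomorphic_map_openness[OF hom Wsub] H1 by blast
  have cC': "\<forall>n. closedin (Acomp AY) (h ` C n)"
    using homeomorphic_map_closedness[OF hom Csub] H2 by blast
  have WC': "\<forall>n. h ` W n \<subseteq> h ` C n" using H3 by (simp add: image_mono)
  have Cdec': "\<forall>n. h ` C (Suc n) \<subseteq> h ` C n" using H4 by (simp add: image_mono)
  have pW': "\<forall>n. h (evalmap AX x0) \<in> h ` W n" using H5 by (simp add: imageI)
  have injh: "inj_on h (topspace (Acomp AX))" by (rule homeomorphic_imp_injective_map[OF hom])
  have uniq': "\<forall>r. r \<in> topspace (Acomp AY) \<and> (\<forall>n. r \<in> h ` C n) \<longrightarrow> r = h (evalmap AX x0)"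
  proof (intro allI impI)
    fix r assume r: "r \<in> topspace (Acomp AY) \<and> (\<forall>n. r \<in> h ` C n)"
    then have "\<forall>n. \<exists>q. q \<in> C n \<and> r = h q" by blast
    from choice[OF this] obtain q where q: "\<forall>n. q n \<in> C n \<and> r = h (q n)" by (elim exE)
    have "q n = q 0" for n
    proof -
      have a: "q n \<in> topspace (Acomp AX)" using q Csub by blast
      have b: "q 0 \<in> topspace (Acomp AX)" using q Csub by blast
      have "h (q n) = h (q 0)" using q by metis
      then show ?thesis using inj_onD[OF injh _ a b] by blast
    qed
    then have "q 0 \<in> C n" for n using q by metis
    moreover have "q 0 \<in> topspace (Acomp AX)" using q Csub by blast
    ultimately have "q 0 = evalmap AX x0" using H6 by blast
    then show "r = h (evalmap AX x0)" using q by metis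
  qed
  show ?thesis using Y_part[OF assms(2) assms(3) oW' cC' WC' Cdec' pW' uniq'] by simp
qed


end
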